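(* Let $\omega\subset\mathbb{R}^d\times\mathbb{R}^d$ be a domain (not necessarily bounded), $T>0$, $\omega_T=(0,T]\times\omega$, and $0<\lambda<\Lambda$. Let $A(t,x,v)$ (symmetric $d\times d$ matrix) and $B(t,x,v)\in\mathbb{R}^d$ be continuous on $\omega_T$ with $\lambda|\xi|^2\le A\xi\cdot\xi\le\Lambda|\xi|^2$ and $|B\cdot\xi|\le\Lambda\langle v\rangle|\xi|$ for all $\xi\in\mathbb{R}^d$ and $(t,x,v)\in\omega_T$. If $f\in\mathcal{C}^2_{\rm kin}(\omega_T)\cap\mathcal{C}^0(\overline{\omega_T})$ is bounded and satisfies \[ (\partial_t+v\cdot\nabla_x)f-\mathrm{tr}(AD_v^2f)-B\cdot\nabla_vf\le0\quad\text{in }\omega_T, \] then $\sup_{\omega_T}f\le\sup_{\partial_p\omega_T}f$, where $\partial_p\omega_T=[0,T]\times\overline{\omega}\setminus(0,T]\times\omega$.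
   Context: $\langle v\rangle=(1+|v|^2)^{1/2}$. $\mathcal{C}^2_{\rm kin}(\omega_T)$ denotes continuous functions $f$ on $\omega_T$ for which $\nabla_vf$, $D_v^2f$ and the transport derivative $(\partial_t+v\cdot\nabla_x)f$ exist and are continuous on $\omega_T$. *)

theory Defs
  imports "HOL-Analysis.Analysis"
begin

definition japanese :: "real^'n \<Rightarrow> real" where
  "japanese v = sqrt (1 + (norm v)\<^sup>2)"

definition cyl :: "real \<Rightarrow> ((real^'n) \<times> (real^'n)) set \<Rightarrow> (real \<times> ((real^'n) \<times> (real^'n))) set" where
  "cyl T \<omega> = {0<..T} \<times> \<omega>"

definition parabolic_boundary ::
  "real \<Rightarrow> ((real^'n) \<times> (real^'n)) set \<Rightarrow> (real \<times> ((real^'n) \<times> (real^'n))) set" where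
  "parabolic_boundary T \<omega> = ({0..T} \<times> closure \<omega>) - ({0<..T} \<times> \<omega>)"

text \<open>f is in C^2_kin(omega_T), with transport derivative Tf, velocity gradient Gv and velocity
  Hessian Hv (Hv p $ i $ j = d_{v_j} d_{v_i} f). At t = T the transport derivative is one-sided
  (from the left), since omega_T contains the top time slice.\<close>
definition kin_C2 ::
  "real \<Rightarrow> ((real^'n) \<times> (real^'n)) set \<Rightarrow> (real \<times> ((real^'n) \<times> (real^'n)) \<Rightarrow> real)
   \<Rightarrow> (real \<times> ((real^'n) \<times> (real^'n)) \<Rightarrow> real)
   \<Rightarrow> (real \<times> ((real^'n) \<times> (real^'n)) \<Rightarrow> real^'n)
   \<Rightarrow> (real \<times> ((real^'n) \<times> (real^'n)) \<Rightarrow> real^'n^'n) \<Rightarrow> bool" where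
  "kin_C2 T \<omega> f Tf Gv Hv \<longleftrightarrow>
     continuous_on (cyl T \<omega>) f \<and>
     continuous_on (cyl T \<omega>) Tf \<and>
     continuous_on (cyl T \<omega>) Gv \<and>
     continuous_on (cyl T \<omega>) Hv \<and>
     (\<forall>t x v. (t, (x, v)) \<in> cyl T \<omega> \<longrightarrow>
        ((\<lambda>s. f (t + s, (x + s *\<^sub>R v, v))) has_real_derivative Tf (t, (x, v)))
           (at 0 within {s. t + s \<le> T}) \<and>
        ((\<lambda>w. f (t, (x, w))) has_derivative (\<lambda>h. Gv (t, (x, v)) \<bullet> h)) (at v) \<and>
        ((\<lambda>w. Gv (t, (x, w))) has_derivative (\<lambda>h. Hv (t, (x, v)) *v h)) (at v))"

end

theory Submission
  imports Defs
begin


definition QF :: "real^'n^'n \<Rightarrow> real^'n \<Rightarrow> real" where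
  "QF M \<xi> = (\<Sum>i\<in>UNIV. \<xi>$i * (\<Sum>j\<in>UNIV. M$i$j * \<xi>$j))"

lemma mult_if0: "(x::real) * (if P then y else 0) = (if P then x * y else 0)"
  "(if P then y else 0) * (x::real) = (if P then y * x else 0)" by auto

lemma QF_two:
  assumes sym: "\<forall>i j. A$i$j = A$j$i" and jk: "j \<noteq> k"
  shows "QF A (\<chi> i. (if i = k then s else 0) + (if i = j then 1 else 0)) = (A$k$k) * s * s + 2 * s * (A$j$k) + A$j$j"
proof -
  have "\<And>i. (\<Sum>l\<in>UNIV. A$i$l * ((if l = k then s else 0) + (if l = j then 1 else 0))) = A$i$k * s + A$i$j"
    by (simp add: distrib_left sum.distrib mult_if0)
  then show ?thesis using jk sym
    by (simp add: QF_def distrib_right sum.distrib mult_if0 algebra_simps)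
qed

lemma QF_shift:
  assumes sym: "\<forall>i j. A$i$j = A$j$i"
  shows "QF A (\<chi> i. \<xi>$i - (if i = k then c else 0)) = QF A \<xi> - 2 * c * (\<Sum>i\<in>UNIV. A$i$k * \<xi>$i) + c * c * (A$k$k)"
proof -
  have "\<And>i. (\<Sum>l\<in>UNIV. A$i$l * (\<xi>$l - (if l = k then c else 0))) = (\<Sum>l\<in>UNIV. A$i$l * \<xi>$l) - A$i$k * c"
    by (simp add: right_diff_distrib sum_subtractf mult_if0)
  then have "QF A (\<chi> i. \<xi>$i - (if i = k then c else 0)) = (\<Sum>i\<in>UNIV. (\<xi>$i - (if i = k then c else 0)) * ((\<Sum>l\<in>UNIV. A$i$l * \<xi>$l) - A$i$k * c))"
    by (simp add: QF_def)
  also have "\<dots> = QF A \<xi> - c * (\<Sum>i\<in>UNIV. \<xi>$i * A$i$k) - c * (\<Sum>l\<in>UNIV. A$k$l * \<xi>$l) + c * c * (A$k$k)"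
    apply (simp add: QF_def left_diff_distrib right_diff_distrib sum_subtractf mult_if0 sum.distrib)
    apply (simp add: sum_distrib_left algebra_simps)
    done
  finally show ?thesis using sym by (simp add: algebra_simps)
qed

lemma QF_rank1_sub:
  fixes A :: "real^'n^'n"
  shows "QF (\<chi> i j. A$i$j - A$i$k * A$k$j / a) \<xi> = QF A \<xi> - (\<Sum>i\<in>UNIV. \<xi>$i * A$i$k) * (\<Sum>j\<in>UNIV. A$k$j * \<xi>$j) / a"
  apply (simp add: QF_def right_diff_distrib left_diff_distrib sum_subtractf sum_distrib_left sum_distrib_right
      sum_divide_distrib algebra_simps)
  apply (subst sum.swap)
  apply (simp add: algebra_simps)
  done

lemma trace_split:
  fixes A H :: "real^'n^'n"
  assumes "a \<noteq> 0"
  shows "(\<Sum>i\<in>UNIV. \<Sum>j\<in>UNIV. A$i$j * H$j$i) =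
     (\<Sum>i\<in>UNIV. \<Sum>j\<in>UNIV. (\<chi> i j. A$i$j - A$i$k * A$k$j / a)$i$j * H$j$i)
     + (\<Sum>i\<in>UNIV. \<Sum>j\<in>UNIV. A$i$k * A$k$j * H$j$i) / a"
  using assms
  by (simp add: left_diff_distrib sum_subtractf sum_divide_distrib)

lemma trace_aux_gen:
  fixes H :: "real^'n^'n"
  assumes Hc: "\<forall>\<xi>. QF H \<xi> \<le> c * (\<Sum>i\<in>UNIV. \<xi>$i * \<xi>$i)"
  shows "finite I \<Longrightarrow> \<forall>A::real^'n^'n. (\<forall>i j. A$i$j = A$j$i) \<and> (\<forall>\<xi>. 0 \<le> QF A \<xi>) \<and> (\<forall>i j. A$i$j \<noteq> 0 \<longrightarrow> i \<in> I)
     \<longrightarrow> (\<Sum>i\<in>UNIV. \<Sum>j\<in>UNIV. A$i$j * H$j$i) \<le> c * (\<Sum>i\<in>UNIV. A$i$i)"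
proof (induction I rule: finite_induct)
  case empty
  then show ?case by auto
next
  case (insert k I)
  show ?case
  proof (intro allI impI, elim conjE)
    fix A :: "real^'n^'n"
    assume sym: "\<forall>i j. A$i$j = A$j$i" and psd: "\<forall>\<xi>. 0 \<le> QF A \<xi>" and supp: "\<forall>i j. A$i$j \<noteq> 0 \<longrightarrow> i \<in> insert k I"
    define a where "a = A$k$k"
    have "0 \<le> QF A (\<chi> i. (if i = k then 0 else 0) + (if i = k then 1 else 0))" using psd by blast
    then have a0: "0 \<le> a" by (simp add: QF_def a_def mult_if0)
    show "(\<Sum>i\<in>UNIV. \<Sum>j\<in>UNIV. A$i$j * H$j$i) \<le> c * (\<Sum>i\<in>UNIV. A$i$i)"
    proof (cases "a = 0")
      case True
      have row: "A$k$j = 0" for j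
      proof (cases "j = k")
        case True then show ?thesis using \<open>a = 0\<close> a_def by simp
      next
        case jk: False
        show ?thesis
        proof (rule ccontr)
          assume ne: "A$k$j \<noteq> 0"
          define s where "s = - (A$j$j + 1) / (2 * A$j$k)"
          have "0 \<le> QF A (\<chi> i. (if i = k then s else 0) + (if i = j then 1 else 0))" using psd by blast
          also have "\<dots> = a * s * s + 2 * s * (A$j$k) + A$j$j" using QF_two[OF sym jk] a_def by simp
          also have "\<dots> = -1" using ne sym \<open>a = 0\<close> by (simp add: s_def field_simps)
          finally show False by simp
        qed
      qed
      have "\<forall>i j. A$i$j \<noteq> 0 \<longrightarrow> i \<in> I" using supp row by fastforce
      then show ?thesis using insert.IH sym psd by blast
    next
      case False
      then have apos: "0 < a" using a0 by simp
      define A' where "A' = (\<chi> i j. A$i$j - A$i$k * A$k$j / a)"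
      define u where "u = (\<chi> i. A$i$k)"
      have sym': "\<forall>i j. A'$i$j = A'$j$i" using sym by (simp add: A'_def)
      have psd': "0 \<le> QF A' \<xi>" for \<xi>
      proof -
        define w where "w = (\<Sum>i\<in>UNIV. A$i$k * \<xi>$i)"
        have "0 \<le> QF A (\<chi> i. \<xi>$i - (if i = k then w / a else 0))" using psd by blast
        also have "\<dots> = QF A \<xi> - 2 * (w/a) * w + (w/a) * (w/a) * a"
          using QF_shift[OF sym] a_def w_def by simp
        also have "\<dots> = QF A \<xi> - w * w / a" using apos by (simp add: field_simps power2_eq_square)
        also have "\<dots> = QF A' \<xi>"
        proof -
          have "(\<Sum>i\<in>UNIV. \<xi>$i * A$i$k) = w" by (simp add: w_def mult.commute)
          moreover have "(\<Sum>j\<in>UNIV. A$k$j * \<xi>$j) = w" using sym by (simp add: w_def)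
          ultimately show ?thesis by (simp add: A'_def QF_rank1_sub)
        qed
        finally show ?thesis .
      qed
      have supp': "\<forall>i j. A'$i$j \<noteq> 0 \<longrightarrow> i \<in> I"
      proof (intro allI impI)
        fix i j assume ne: "A'$i$j \<noteq> 0"
        show "i \<in> I"
        proof (rule ccontr)
          assume "i \<notin> I"
          show False
          proof (cases "i = k")
            case True then show False using ne apos by (simp add: A'_def a_def)
          next
            case False
            then have "A$i$j = 0" "A$i$k = 0" using supp \<open>i \<notin> I\<close> by auto
            then show False using ne by (simp add: A'_def)
          qed
        qed
      qed
      have IH: "(\<Sum>i\<in>UNIV. \<Sum>j\<in>UNIV. A'$i$j * H$j$i) \<le> c * (\<Sum>i\<in>UNIV. A'$i$i)"
        using insert.IH sym' psd' supp' by blast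
      have "(\<Sum>i\<in>UNIV. \<Sum>j\<in>UNIV. A$i$k * A$k$j * H$j$i) = QF H u"
        unfolding QF_def u_def using sym
        by (subst sum.swap) (simp add: sum_distrib_left algebra_simps)
      also have "\<dots> \<le> c * (\<Sum>i\<in>UNIV. u$i * u$i)" using Hc by blast
      finally have r1: "(\<Sum>i\<in>UNIV. \<Sum>j\<in>UNIV. A$i$k * A$k$j * H$j$i) \<le> c * (\<Sum>i\<in>UNIV. u$i * u$i)" .
      have tA: "(\<Sum>i\<in>UNIV. A$i$i) = (\<Sum>i\<in>UNIV. A'$i$i) + (\<Sum>i\<in>UNIV. u$i * u$i) / a"
        using apos sym by (simp add: A'_def u_def sum_subtractf sum_divide_distrib)
      have "(\<Sum>i\<in>UNIV. \<Sum>j\<in>UNIV. A$i$j * H$j$i) =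
            (\<Sum>i\<in>UNIV. \<Sum>j\<in>UNIV. A'$i$j * H$j$i) + (\<Sum>i\<in>UNIV. \<Sum>j\<in>UNIV. A$i$k * A$k$j * H$j$i) / a"
        unfolding A'_def using trace_split[OF False] .
      also have "\<dots> \<le> c * (\<Sum>i\<in>UNIV. A'$i$i) + c * (\<Sum>i\<in>UNIV. u$i * u$i) / a"
        using IH r1 apos by (simp add: divide_right_mono add_mono)
      also have "\<dots> = c * (\<Sum>i\<in>UNIV. A$i$i)" using tA by (simp add: algebra_simps)
      finally show ?thesis .
    qed
  qed
qed

lemma trace_aux:
  fixes A H :: "real^'n^'n"
  assumes "\<forall>i j. A$i$j = A$j$i" "\<forall>\<xi>. 0 \<le> QF A \<xi>"
    "\<forall>\<xi>. QF H \<xi> \<le> c * (\<Sum>i\<in>UNIV. \<xi>$i * \<xi>$i)"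
  shows "(\<Sum>i\<in>UNIV. \<Sum>j\<in>UNIV. A$i$j * H$j$i) \<le> c * (\<Sum>i\<in>UNIV. A$i$i)"
  using trace_aux_gen[OF assms(3) finite_class.finite_UNIV] assms(1,2) by blast



lemma QF_eq: "QF M \<xi> = (M *v \<xi>) \<bullet> \<xi>"
  by (simp add: QF_def inner_vec_def matrix_vector_mult_def mult.commute)

lemma sq_eq: "(\<Sum>i\<in>UNIV. \<xi>$i * \<xi>$i) = \<xi> \<bullet> (\<xi>::real^'n)"
  by (simp add: inner_vec_def)

lemma trace_eq: "trace (A ** H) = (\<Sum>i\<in>UNIV. \<Sum>j\<in>UNIV. A$i$j * H$j$i)"
  by (simp add: trace_def matrix_matrix_mult_def)

lemma diag_le: "(A *v axis i 1) \<bullet> axis i (1::real) = A$i$i"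
  by (simp add: matrix_vector_mult_basis inner_axis column_def)

lemma deriv_left_max:
  fixes h :: "real \<Rightarrow> real"
  assumes d: "(h has_real_derivative D) (at 0 within S)" and "\<delta> > 0"
    and le: "\<And>s. -\<delta> < s \<Longrightarrow> s \<le> 0 \<Longrightarrow> s \<in> S \<and> h s \<le> h 0"
  shows "0 \<le> D"
proof (rule ccontr)
  assume "\<not> 0 \<le> D"
  then obtain e where e: "e > 0" "\<forall>s>0. 0 - s \<in> S \<longrightarrow> s < e \<longrightarrow> h 0 < h (0 - s)"
    using has_real_derivative_neg_dec_left[OF d] by force
  define s where "s = min e \<delta> / 2"
  have "s > 0" "s < e" "s < \<delta>" using e \<open>\<delta> > 0\<close> by (auto simp: s_def)
  then have "0 - s \<in> S" "h (0 - s) \<le> h 0" using le[of "-s"] by auto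
  then show False using e \<open>s > 0\<close> \<open>s < e\<close> by force
qed

lemma deriv2_max:
  fixes h k :: "real \<Rightarrow> real"
  assumes "\<delta> > 0" and hd: "\<And>s. \<bar>s\<bar> < \<delta> \<Longrightarrow> (h has_real_derivative k s) (at s)"
    and k0: "k 0 = 0" and kd: "(k has_real_derivative c) (at 0)"
    and le: "\<And>s. \<bar>s\<bar> < \<delta> \<Longrightarrow> h s \<le> h 0"
  shows "c \<le> 0"
proof (rule ccontr)
  assume "\<not> c \<le> 0"
  then obtain e where e: "e > 0" "\<forall>s>0. s < e \<longrightarrow> k 0 < k (0 + s)"
    using DERIV_pos_inc_right[OF kd] by force
  define s where "s = min e \<delta> / 2"
  have s: "s > 0" "s < e" "s < \<delta>" using e \<open>\<delta> > 0\<close> by (auto simp: s_def)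
  have "\<And>y. 0 \<le> y \<Longrightarrow> y \<le> s \<Longrightarrow> (h has_real_derivative k y) (at y)"
    using hd s by auto
  then obtain z where z: "0 < z" "z < s" "h s - h 0 = (s - 0) * k z"
    using MVT2[OF \<open>s > 0\<close>] by blast
  have "k z > 0" using e z s k0 by force
  then have "s * k z > 0" using s by simp
  then have "h s > h 0" using z by simp
  moreover have "h s \<le> h 0" using le s by simp
  ultimately show False by simp
qed

lemma chain_line:
  assumes "(F has_derivative (\<lambda>h. G \<bullet> h)) (at (v + s *\<^sub>R \<xi>))"
  shows "((\<lambda>s. F (v + s *\<^sub>R \<xi>)) has_real_derivative (G \<bullet> \<xi>)) (at s)"
proof -
  have l: "((\<lambda>s. v + s *\<^sub>R \<xi>) has_derivative (\<lambda>h. h *\<^sub>R \<xi>)) (at s)"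
    by (auto intro!: derivative_eq_intros)
  have "((F \<circ> (\<lambda>s. v + s *\<^sub>R \<xi>)) has_derivative ((\<lambda>h. G \<bullet> h) \<circ> (\<lambda>h. h *\<^sub>R \<xi>))) (at s)"
    by (rule diff_chain_at[OF l]) (use assms in simp)
  moreover have "((\<lambda>h. G \<bullet> h) \<circ> (\<lambda>h. h *\<^sub>R \<xi>)) = (*) (G \<bullet> \<xi>)"
    by (auto simp: fun_eq_iff)
  ultimately show ?thesis by (simp add: has_field_derivative_def o_def)
qed

lemma chain_line2:
  fixes H :: "real^'n^'n" and v \<xi> :: "real^'n"
  assumes "(F has_derivative (\<lambda>h. H *v h)) (at (v + s *\<^sub>R \<xi>))"
  shows "((\<lambda>s. F (v + s *\<^sub>R \<xi>) \<bullet> \<xi>) has_real_derivative ((H *v \<xi>) \<bullet> \<xi>)) (at s)"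
proof -
  have l: "((\<lambda>s. v + s *\<^sub>R \<xi>) has_derivative (\<lambda>h. h *\<^sub>R \<xi>)) (at s)"
    by (auto intro!: derivative_eq_intros)
  have "((F \<circ> (\<lambda>s. v + s *\<^sub>R \<xi>)) has_derivative ((\<lambda>h. H *v h) \<circ> (\<lambda>h. h *\<^sub>R \<xi>))) (at s)"
    by (rule diff_chain_at[OF l]) (use assms in simp)
  then have "((\<lambda>s. (F \<circ> (\<lambda>s. v + s *\<^sub>R \<xi>)) s \<bullet> \<xi>) has_derivative (\<lambda>h. ((\<lambda>h. H *v h) \<circ> (\<lambda>h. h *\<^sub>R \<xi>)) h \<bullet> \<xi>)) (at s)"
    by (intro has_derivative_inner_left) (simp add: o_def)
  moreover have "(\<lambda>h. ((\<lambda>h. H *v h) \<circ> (\<lambda>h. h *\<^sub>R \<xi>)) h \<bullet> \<xi>) = (*) ((H *v \<xi>) \<bullet> \<xi>)"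
    by (auto simp: fun_eq_iff matrix_vector_mult_scaleR)
  ultimately show ?thesis by (simp add: has_field_derivative_def o_def)
qed

lemma norm_line: "norm (x + s *\<^sub>R v)^2 = norm x ^2 + 2 * s * (x \<bullet> v) + s^2 * norm v ^2"
  unfolding power2_norm_eq_inner by (simp add: inner_add_left inner_add_right algebra_simps power2_eq_square inner_commute)

lemma jap_bound: "japanese v * norm v \<le> 1 + norm v ^2"
proof -
  have s: "japanese v ^2 = 1 + norm v^2" by (simp add: japanese_def)
  have "2 * (japanese v * norm v) \<le> japanese v ^2 + norm v^2"
    using sum_squares_bound[of "japanese v" "norm v"] by (simp add: algebra_simps power2_eq_square)
  then show ?thesis using s by simp
qed



theorem lemmaA1:
  fixes \<omega> :: "((real^'n) \<times> (real^'n)) set"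
    and T lam Lam :: real
    and A :: "real \<times> ((real^'n) \<times> (real^'n)) \<Rightarrow> real^'n^'n"
    and B :: "real \<times> ((real^'n) \<times> (real^'n)) \<Rightarrow> real^'n"
    and f Tf :: "real \<times> ((real^'n) \<times> (real^'n)) \<Rightarrow> real"
    and Gv :: "real \<times> ((real^'n) \<times> (real^'n)) \<Rightarrow> real^'n"
    and Hv :: "real \<times> ((real^'n) \<times> (real^'n)) \<Rightarrow> real^'n^'n"
  assumes dom: "open \<omega>" "connected \<omega>" "\<omega> \<noteq> {}"
    and T: "T > 0"
    and lam: "0 < lam" "lam < Lam"
    and A_cont: "continuous_on (cyl T \<omega>) A"
    and A_sym: "\<forall>p\<in>cyl T \<omega>. transpose (A p) = A p"
    and A_ell: "\<forall>p\<in>cyl T \<omega>. \<forall>\<xi>. lam * (norm \<xi>)\<^sup>2 \<le> (A p *v \<xi>) \<bullet> \<xi> \<and>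
                                  (A p *v \<xi>) \<bullet> \<xi> \<le> Lam * (norm \<xi>)\<^sup>2"
    and B_cont: "continuous_on (cyl T \<omega>) B"
    and B_bd: "\<forall>t x v \<xi>. (t, (x, v)) \<in> cyl T \<omega> \<longrightarrow>
                 \<bar>B (t, (x, v)) \<bullet> \<xi>\<bar> \<le> Lam * japanese v * norm \<xi>"
    and f_kin: "kin_C2 T \<omega> f Tf Gv Hv"
    and f_cont: "continuous_on (closure (cyl T \<omega>)) f"
    and f_bdd: "bounded (f ` closure (cyl T \<omega>))"
    and f_sub: "\<forall>p\<in>cyl T \<omega>. Tf p - trace (A p ** Hv p) - B p \<bullet> Gv p \<le> 0"
  shows "\<forall>p\<in>cyl T \<omega>. f p \<le> (SUP q\<in>parabolic_boundary T \<omega>. f q)"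
proof -
  define M where "M = (SUP q\<in>parabolic_boundary T \<omega>. f q)"
  define C where "C = 2 + 2 * Lam + 2 * real CARD('n) * Lam"
  define phi where "phi = (\<lambda>q::real \<times> ((real^'n) \<times> (real^'n)).
     exp (C * fst q) * (1 + norm (fst (snd q))^2 + norm (snd (snd q))^2))"
  have Lam0: "Lam > 0" using lam by simp
  have C0: "C \<ge> 0" unfolding C_def using Lam0 by simp
  have phi_pos: "phi q > 0" for q unfolding phi_def
    by (intro mult_pos_pos) (auto intro!: add_pos_nonneg)
  have cl: "closure (cyl T \<omega>) = {0..T} \<times> closure \<omega>" using T by (simp add: cyl_def closure_Times)
  have cyl_sub: "cyl T \<omega> \<subseteq> closure (cyl T \<omega>)" by (rule closure_subset)
  have pb_sub: "parabolic_boundary T \<omega> \<subseteq> closure (cyl T \<omega>)"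
    unfolding cl parabolic_boundary_def by auto
  obtain z0 where z0: "z0 \<in> \<omega>" using dom(3) by auto
  have pb_ne: "(0, z0) \<in> parabolic_boundary T \<omega>"
    using z0 T closure_subset by (auto simp: parabolic_boundary_def)
  obtain F where F: "\<forall>q\<in>closure (cyl T \<omega>). \<bar>f q\<bar> \<le> F"
    using f_bdd unfolding bounded_iff by auto
  have bdd: "bdd_above (f ` parabolic_boundary T \<omega>)"
    using F pb_sub by (intro bdd_aboveI2[of _ _ F]) force
  have Mup: "f q \<le> M" if "q \<in> parabolic_boundary T \<omega>" for q
    unfolding M_def using that bdd by (rule cSUP_upper)
  have MF: "-F \<le> M" using Mup[OF pb_ne] F pb_sub pb_ne by force
  have notcyl: "q \<in> parabolic_boundary T \<omega>" if "q \<in> closure (cyl T \<omega>)" "q \<notin> cyl T \<omega>" for q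
    using that unfolding parabolic_boundary_def cl by (auto simp: cyl_def)
  have main: "f p \<le> M" if p: "p \<in> cyl T \<omega>" for p
  proof (rule ccontr)
    assume "\<not> f p \<le> M"
    hence fpM: "f p > M" by simp
    define eps where "eps = (f p - M) / (2 * phi p)"
    have eps: "eps > 0" unfolding eps_def using fpM phi_pos[of p] by simp
    define g where "g = (\<lambda>q. f q - eps * phi q)"
    have gp: "g p > M" unfolding g_def eps_def using fpM phi_pos[of p] by (simp add: field_simps)
    have F0: "F \<ge> 0" using F p cyl_sub by force
    define r where "r = 2 * F / eps + 1"
    have r1: "r \<ge> 1" unfolding r_def using F0 eps by simp
    define K where "K = closure (cyl T \<omega>) \<inter> ({0..T} \<times> (cball 0 r \<times> cball 0 r))"
    have Kc: "compact K" unfolding K_def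
      by (intro closed_Int_compact closed_closure compact_Times compact_Icc compact_cball)
    have out: "g q < -F" if q: "q \<in> closure (cyl T \<omega>)" "q \<notin> K" for q
    proof -
      obtain t x v where qq: "q = (t, (x, v))" by (metis prod.collapse)
      have t: "0 \<le> t" "t \<le> T" using q cl qq by auto
      have "norm x > r \<or> norm v > r" using q t qq unfolding K_def by auto
      then have "r < norm x ^ 2 + norm v ^ 2"
      proof
        assume h: "norm x > r"
        have "r * 1 \<le> r * r" using r1 by (intro mult_left_mono) auto
        moreover have "r * r < norm x * norm x" using r1 h by (intro mult_strict_mono) auto
        moreover have "0 \<le> norm v ^ 2" by simp
        ultimately show ?thesis unfolding power2_eq_square by linarith
      next
        assume h: "norm v > r"
        have "r * 1 \<le> r * r" using r1 by (intro mult_left_mono) auto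
        moreover have "r * r < norm v * norm v" using r1 h by (intro mult_strict_mono) auto
        moreover have "0 \<le> norm x ^ 2" by simp
        ultimately show ?thesis unfolding power2_eq_square by linarith
      qed
      moreover have e1: "exp (C * t) \<ge> 1" using C0 t by simp
      moreover have "phi q = exp (C * t) * (1 + norm x ^ 2 + norm v ^ 2)" unfolding phi_def qq by simp
      moreover have "(1 + norm x ^ 2 + norm v ^ 2) \<le> exp (C * t) * (1 + norm x ^ 2 + norm v ^ 2)"
      proof -
        have P0: "0 \<le> 1 + norm x ^ 2 + norm v ^ 2" by (intro add_nonneg_nonneg) auto
        show ?thesis using mult_right_mono[OF e1 P0] by simp
      qed
      ultimately have "phi q \<ge> 1 + r" by linarith
      then have "eps * phi q \<ge> eps * (1 + r)" using eps by simp
      moreover have "eps * (1 + r) > 2 * F" unfolding r_def using eps by (simp add: field_simps)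
      moreover have "f q \<le> F" using F q by force
      ultimately show ?thesis unfolding g_def by simp
    qed
    have pK: "p \<in> K" using out[of p] gp MF cyl_sub p by force
    have gcont: "continuous_on (closure (cyl T \<omega>)) g" unfolding g_def phi_def
      by (intro continuous_intros f_cont)
    obtain q where q: "q \<in> K" "\<forall>y\<in>K. g y \<le> g q"
      using continuous_attains_sup[OF Kc _ continuous_on_subset[OF gcont]] pK K_def by blast
    have qcl: "q \<in> closure (cyl T \<omega>)" using q K_def by auto
    have gqM: "g q > M" using q pK gp by force
    have qmax: "g y \<le> g q" if "y \<in> closure (cyl T \<omega>)" for y
    proof (cases "y \<in> K")
      case True then show ?thesis using q by auto
    next
      case False then show ?thesis using out[OF that] MF gqM by simp
    qed
    have qcyl: "q \<in> cyl T \<omega>"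
    proof (rule ccontr)
      assume "q \<notin> cyl T \<omega>"
      then have "f q \<le> M" using Mup notcyl qcl by blast
      moreover have "g q \<le> f q" unfolding g_def using eps phi_pos[of q] by simp
      ultimately show False using gqM by simp
    qed
    obtain t x v where qq: "q = (t, (x, v))" by (metis prod.collapse)
    have t: "0 < t" "t \<le> T" and xv: "(x, v) \<in> \<omega>" using qcyl qq by (auto simp: cyl_def)
    obtain \<rho> where \<rho>: "\<rho> > 0" "ball (x, v) \<rho> \<subseteq> \<omega>" using dom(1) xv open_contains_ball by blast
    have in\<omega>: "(y, w) \<in> \<omega>" if "dist y x < \<rho>/2" "dist w v < \<rho>/2" for y w
    proof -
      have "dist (x, v) (y, w) \<le> dist y x + dist w v"
        using norm_Pair_le[of "x - y" "v - w"] by (simp add: dist_norm norm_minus_commute)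
      then show ?thesis using that \<rho> by auto
    qed
    have incyl: "(s, (y, w)) \<in> cyl T \<omega>" if "0 < s" "s \<le> T" "dist y x < \<rho>/2" "dist w v < \<rho>/2" for s y w
      using in\<omega>[OF that(3,4)] that(1,2) by (simp add: cyl_def)
    define a where "a = exp (C * t)"
    have a0: "a > 0" unfolding a_def by simp
    define \<psi> where "\<psi> = 1 + norm x ^ 2 + norm v ^ 2"
    have kinT: "((\<lambda>s. f (t' + s, (y + s *\<^sub>R w, w))) has_real_derivative Tf (t', (y, w))) (at 0 within {s. t' + s \<le> T})"
      if "(t', (y, w)) \<in> cyl T \<omega>" for t' y w
      using f_kin that unfolding kin_C2_def by blast
    have kinG: "((\<lambda>w'. f (t', (y, w'))) has_derivative (\<lambda>h. Gv (t', (y, w)) \<bullet> h)) (at w)"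
      if "(t', (y, w)) \<in> cyl T \<omega>" for t' y w
      using f_kin that unfolding kin_C2_def by blast
    have kinH: "((\<lambda>w'. Gv (t', (y, w'))) has_derivative (\<lambda>h. Hv (t', (y, w)) *v h)) (at w)"
      if "(t', (y, w)) \<in> cyl T \<omega>" for t' y w
      using f_kin that unfolding kin_C2_def by blast
    have kin: "((\<lambda>s. f (t + s, (x + s *\<^sub>R v, v))) has_real_derivative Tf q) (at 0 within {s. t + s \<le> T})"
      "\<And>w. dist w v < \<rho>/2 \<Longrightarrow> ((\<lambda>w'. f (t, (x, w'))) has_derivative (\<lambda>h. Gv (t, (x, w)) \<bullet> h)) (at w)"
      "((\<lambda>w. Gv (t, (x, w))) has_derivative (\<lambda>h. Hv q *v h)) (at v)"
    proof -
      show "((\<lambda>s. f (t + s, (x + s *\<^sub>R v, v))) has_real_derivative Tf q) (at 0 within {s. t + s \<le> T})"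
        using kinT qcyl qq by simp
      show "((\<lambda>w. Gv (t, (x, w))) has_derivative (\<lambda>h. Hv q *v h)) (at v)"
        using kinH qcyl qq by simp
      fix w assume "dist w v < \<rho>/2"
      then have "(t, (x, w)) \<in> cyl T \<omega>" using incyl[of t x w] t \<rho> by simp
      then show "((\<lambda>w'. f (t, (x, w'))) has_derivative (\<lambda>h. Gv (t, (x, w)) \<bullet> h)) (at w)"
        by (rule kinG)
    qed
    have I: "Tf q - eps * (C * a * \<psi> + a * (2 * (x \<bullet> v))) \<ge> 0"
    proof -
      have eqf: "(\<lambda>s. g (t + s, (x + s *\<^sub>R v, v))) = (\<lambda>s. f (t + s, (x + s *\<^sub>R v, v)) -
          eps * (exp (C * (t + s)) * (1 + (norm x ^ 2 + 2 * s * (x \<bullet> v) + s ^ 2 * norm v ^ 2) + norm v ^ 2)))"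
        by (simp add: fun_eq_iff g_def phi_def norm_line)
      have dphi: "((\<lambda>s. exp (C * (t + s)) * (1 + (norm x ^ 2 + 2 * s * (x \<bullet> v) + s ^ 2 * norm v ^ 2) + norm v ^ 2))
          has_real_derivative (C * a * \<psi> + a * (2 * (x \<bullet> v)))) (at 0 within {s. t + s \<le> T})"
        by (auto intro!: derivative_eq_intros simp: a_def \<psi>_def algebra_simps)
      have d: "((\<lambda>s. g (t + s, (x + s *\<^sub>R v, v))) has_real_derivative
           (Tf q - eps * (C * a * \<psi> + a * (2 * (x \<bullet> v))))) (at 0 within {s. t + s \<le> T})"
        unfolding eqf by (intro DERIV_diff DERIV_cmult kin(1) dphi)
      define \<delta> where "\<delta> = min t (\<rho> / 2 / (norm v + 1))"
      have \<delta>: "\<delta> > 0" proof -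
        have nv0: "0 < norm v + 1" using norm_ge_zero[of v] by linarith
        have "0 < \<rho> / 2 / (norm v + 1)" using \<rho>(1) nv0 by simp
        then show ?thesis unfolding \<delta>_def using t by simp
      qed
      show ?thesis
      proof (rule deriv_left_max[OF d \<delta>])
        fix s :: real assume s: "- \<delta> < s" "s \<le> 0"
        have s1: "\<bar>s\<bar> < \<rho> / 2 / (norm v + 1)" using s unfolding \<delta>_def by auto
        have nv: "norm v + 1 > 0" using norm_ge_zero[of v] by linarith
        have s2: "\<bar>s\<bar> * (norm v + 1) < \<rho> / 2" using s1 nv by (simp add: pos_less_divide_eq algebra_simps)
        have "norm (s *\<^sub>R v) \<le> \<bar>s\<bar> * (norm v + 1)" by (simp add: mult_left_mono)
        then have d1: "dist (x + s *\<^sub>R v) x < \<rho>/2" using s2 by (simp add: dist_norm)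
        have t1: "0 < t + s" using s unfolding \<delta>_def by auto
        have t2: "t + s \<le> T" using s t by simp
        have "(t + s, (x + s *\<^sub>R v, v)) \<in> cyl T \<omega>" using incyl[OF t1 t2 d1] \<rho>(1) by simp
        then have "g (t + s, (x + s *\<^sub>R v, v)) \<le> g q" using qmax cyl_sub by blast
        then show "s \<in> {s. t + s \<le> T} \<and> g (t + s, (x + s *\<^sub>R v, v)) \<le> g (t + 0, (x + 0 *\<^sub>R v, v))"
          using t2 qq by simp
      qed
    qed
    have vq: "(t, (x, v)) = q" using qq by simp
    have gv_le: "g (t, (x, y)) \<le> g q" if "dist y v < \<rho>/2" for y
    proof -
      have "(t, (x, y)) \<in> cyl T \<omega>" using incyl[of t x y] t \<rho>(1) that by simp
      then show ?thesis using qmax cyl_sub by blast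
    qed
    have II: "Gv q \<bullet> h = eps * (a * (h \<bullet> v + v \<bullet> h))" for h
    proof -
      have eq: "(\<lambda>w. g (t, (x, w))) = (\<lambda>w. f (t, (x, w)) - eps * (a * (1 + x \<bullet> x + w \<bullet> w)))"
        by (simp add: fun_eq_iff g_def phi_def a_def power2_norm_eq_inner)
      have kv: "((\<lambda>w'. f (t, (x, w'))) has_derivative (\<lambda>h. Gv q \<bullet> h)) (at v)"
        using kin(2)[of v] \<rho>(1) vq by simp
      have d: "((\<lambda>w. g (t, (x, w))) has_derivative (\<lambda>h. Gv q \<bullet> h - eps * (a * (h \<bullet> v + v \<bullet> h)))) (at v)"
        unfolding eq by (auto intro!: derivative_eq_intros kv)
      have "(\<lambda>h. Gv q \<bullet> h - eps * (a * (h \<bullet> v + v \<bullet> h))) = (\<lambda>h. 0)"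
      proof (rule differential_zero_maxmin[OF _ _ d])
        show "v \<in> ball v (\<rho>/2)" using \<rho>(1) by simp
        show "open (ball v (\<rho>/2))" by simp
        show "(\<forall>y\<in>ball v (\<rho>/2). g (t, (x, y)) \<le> g (t, (x, v))) \<or> (\<forall>y\<in>ball v (\<rho>/2). g (t, (x, v)) \<le> g (t, (x, y)))"
          using gv_le vq by (auto simp: dist_commute)
      qed
      then show ?thesis by (metis (no_types, lifting) eq_iff_diff_eq_0)
    qed
    have III: "(Hv q *v \<xi>) \<bullet> \<xi> - eps * (a * (2 * (\<xi> \<bullet> \<xi>))) \<le> 0" for \<xi>
    proof -
      define \<delta> where "\<delta> = \<rho> / 2 / (norm \<xi> + 1)"
      have nx0: "0 < norm \<xi> + 1" using norm_ge_zero[of \<xi>] by linarith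
      have \<delta>: "\<delta> > 0" unfolding \<delta>_def using \<rho>(1) nx0 by simp
      have dist_s: "dist (v + s *\<^sub>R \<xi>) v < \<rho>/2" if "\<bar>s\<bar> < \<delta>" for s
      proof -
        have "\<bar>s\<bar> * (norm \<xi> + 1) < \<rho> / 2" using that nx0 unfolding \<delta>_def by (simp add: pos_less_divide_eq algebra_simps)
        moreover have "norm (s *\<^sub>R \<xi>) \<le> \<bar>s\<bar> * (norm \<xi> + 1)" by (simp add: mult_left_mono)
        ultimately show ?thesis by (simp add: dist_norm)
      qed
      define kk where "kk = (\<lambda>s. Gv (t, (x, v + s *\<^sub>R \<xi>)) \<bullet> \<xi> - eps * (a * (2 * (v \<bullet> \<xi>) + 2 * s * (\<xi> \<bullet> \<xi>))))"
      have eqh: "(\<lambda>s. g (t, (x, v + s *\<^sub>R \<xi>))) = (\<lambda>s. f (t, (x, v + s *\<^sub>R \<xi>)) -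
           eps * (a * (1 + x \<bullet> x + (v \<bullet> v + 2 * s * (v \<bullet> \<xi>) + s ^ 2 * (\<xi> \<bullet> \<xi>)))))"
        by (simp add: fun_eq_iff g_def phi_def a_def norm_line power2_norm_eq_inner[symmetric])
      have hd: "((\<lambda>s. g (t, (x, v + s *\<^sub>R \<xi>))) has_real_derivative kk s) (at s)" if "\<bar>s\<bar> < \<delta>" for s
      proof -
        have f1: "((\<lambda>s. f (t, (x, v + s *\<^sub>R \<xi>))) has_real_derivative (Gv (t, (x, v + s *\<^sub>R \<xi>)) \<bullet> \<xi>)) (at s)"
          by (rule chain_line[OF kin(2)[OF dist_s[OF that]]])
        have p1: "((\<lambda>s. eps * (a * (1 + x \<bullet> x + (v \<bullet> v + 2 * s * (v \<bullet> \<xi>) + s ^ 2 * (\<xi> \<bullet> \<xi>)))))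
            has_real_derivative eps * (a * (2 * (v \<bullet> \<xi>) + 2 * s * (\<xi> \<bullet> \<xi>)))) (at s)"
          by (auto intro!: derivative_eq_intros simp: algebra_simps)
        show ?thesis unfolding eqh kk_def by (rule DERIV_diff[OF f1 p1])
      qed
      have k0: "kk 0 = 0" unfolding kk_def using II[of \<xi>] vq by (simp add: inner_commute)
      have kd: "(kk has_real_derivative ((Hv q *v \<xi>) \<bullet> \<xi> - eps * (a * (2 * (\<xi> \<bullet> \<xi>))))) (at 0)"
      proof -
        have "((\<lambda>w. Gv (t, (x, w))) has_derivative (\<lambda>h. Hv q *v h)) (at (v + 0 *\<^sub>R \<xi>))" using kin(3) by simp
        from chain_line2[OF this]
        have g1: "((\<lambda>s. Gv (t, (x, v + s *\<^sub>R \<xi>)) \<bullet> \<xi>) has_real_derivative ((Hv q *v \<xi>) \<bullet> \<xi>)) (at 0)" .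
        have p1: "((\<lambda>s. eps * (a * (2 * (v \<bullet> \<xi>) + 2 * s * (\<xi> \<bullet> \<xi>)))) has_real_derivative eps * (a * (2 * (\<xi> \<bullet> \<xi>)))) (at 0)"
          by (auto intro!: derivative_eq_intros simp: algebra_simps)
        show ?thesis unfolding kk_def by (rule DERIV_diff[OF g1 p1])
      qed
      show ?thesis
      proof (rule deriv2_max[OF \<delta> hd k0 kd])
        fix s :: real assume "\<bar>s\<bar> < \<delta>"
        then show "g (t, (x, v + s *\<^sub>R \<xi>)) \<le> g (t, (x, v + 0 *\<^sub>R \<xi>))" using gv_le[OF dist_s] vq by simp
      qed
    qed
    have symA: "\<forall>i j. A q $ i $ j = A q $ j $ i"
    proof (intro allI)
      fix i j
      have "transpose (A q) = A q" using A_sym qcyl by blast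
      then have "(transpose (A q)) $ i $ j = A q $ i $ j" by simp
      then show "A q $ i $ j = A q $ j $ i" by (simp add: transpose_def)
    qed
    have psdA: "\<forall>\<xi>. 0 \<le> QF (A q) \<xi>"
    proof
      fix \<xi> :: "real^'n"
      have "lam * (norm \<xi>)\<^sup>2 \<le> (A q *v \<xi>) \<bullet> \<xi>" using A_ell qcyl by blast
      moreover have "0 \<le> lam * (norm \<xi>)\<^sup>2" using lam by simp
      ultimately show "0 \<le> QF (A q) \<xi>" unfolding QF_eq by linarith
    qed
    have HcA: "\<forall>\<xi>. QF (Hv q) \<xi> \<le> (2 * eps * a) * (\<Sum>i\<in>UNIV. \<xi>$i * \<xi>$i)"
      using III unfolding QF_eq sq_eq by (simp add: algebra_simps)
    have tr1: "trace (A q ** Hv q) \<le> (2 * eps * a) * (\<Sum>i\<in>UNIV. A q $ i $ i)"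
      unfolding trace_eq by (rule trace_aux[OF symA psdA HcA])
    have trA: "(\<Sum>i\<in>UNIV. A q $ i $ i) \<le> real CARD('n) * Lam"
    proof -
      have "A q $ i $ i \<le> Lam" for i
      proof -
        have "(A q *v axis i 1) \<bullet> axis i 1 \<le> Lam * (norm (axis i (1::real)))\<^sup>2" using A_ell qcyl by blast
        then show ?thesis by (simp add: diag_le)
      qed
      then have "(\<Sum>i\<in>UNIV. A q $ i $ i) \<le> of_nat (card (UNIV :: 'n set)) * Lam"
        by (intro sum_bounded_above) auto
      then show ?thesis by simp
    qed
    define E where "E = eps * a"
    have E0: "E > 0" unfolding E_def using eps a0 by simp
    define X where "X = x \<bullet> v"
    have subq: "Tf q - trace (A q ** Hv q) - B q \<bullet> Gv q \<le> 0" using f_sub qcyl by blast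
    have T1: "Tf q \<ge> E * (C * \<psi> + 2 * X)" using I unfolding E_def X_def by (simp add: algebra_simps)
    have T2: "trace (A q ** Hv q) \<le> E * (2 * (real CARD('n) * Lam))"
    proof -
      have "(2 * eps * a) * (\<Sum>i\<in>UNIV. A q $ i $ i) \<le> (2 * eps * a) * (real CARD('n) * Lam)"
        using trA eps a0 by (intro mult_left_mono) auto
      then show ?thesis using tr1 unfolding E_def by (simp add: algebra_simps)
    qed
    have Bv: "v \<bullet> B q \<le> Lam * (1 + norm v ^ 2)"
    proof -
      have "\<bar>B (t, (x, v)) \<bullet> v\<bar> \<le> Lam * japanese v * norm v" using B_bd qcyl qq by blast
      moreover have "Lam * (japanese v * norm v) \<le> Lam * (1 + norm v ^ 2)"
        using jap_bound Lam0 by (intro mult_left_mono) auto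
      ultimately show ?thesis using qq by (simp add: inner_commute algebra_simps)
    qed
    have T3: "B q \<bullet> Gv q \<le> E * (2 * (Lam * (1 + norm v ^ 2)))"
    proof -
      have "B q \<bullet> Gv q = E * (2 * (v \<bullet> B q))" using II[of "B q"] unfolding E_def
        by (simp add: inner_commute algebra_simps)
      moreover have "E * (2 * (v \<bullet> B q)) \<le> E * (2 * (Lam * (1 + norm v ^ 2)))"
        using Bv E0 by (intro mult_left_mono) auto
      ultimately show ?thesis by simp
    qed
    have Xb: "2 * X \<ge> - (norm x ^ 2 + norm v ^ 2)"
    proof -
      have "\<bar>X\<bar> \<le> norm x * norm v" unfolding X_def by (rule Cauchy_Schwarz_ineq2)
      moreover have "2 * (norm x * norm v) \<le> norm x ^ 2 + norm v ^ 2"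
        using sum_squares_bound[of "norm x" "norm v"] by (simp add: algebra_simps power2_eq_square)
      ultimately show ?thesis by linarith
    qed
    define n where "n = real CARD('n)"
    have n0: "n \<ge> 0" unfolding n_def by simp
    have psi1: "\<psi> \<ge> 1 + norm v ^ 2" unfolding \<psi>_def by simp
    have f1: "Lam * \<psi> \<ge> Lam * (1 + norm v ^ 2)" using psi1 Lam0 by (intro mult_left_mono) auto
    have psi2: "\<psi> \<ge> 1" using psi1 zero_le_power2[of "norm v"] by linarith
    have f2: "(n * Lam) * \<psi> \<ge> (n * Lam) * 1" using psi2 Lam0 n0
      by (intro mult_left_mono) auto
    have br: "C * \<psi> + 2 * X - 2 * (n * Lam) - 2 * (Lam * (1 + norm v ^ 2)) \<ge> 2"
    proof -
      have "C * \<psi> = 2 * \<psi> + 2 * (Lam * \<psi>) + 2 * ((n * Lam) * \<psi>)" unfolding C_def n_def by (simp add: algebra_simps)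
      then show ?thesis using f1 f2 Xb \<psi>_def zero_le_power2[of "norm x"] zero_le_power2[of "norm v"] by linarith
    qed
    have "E * (C * \<psi> + 2 * X - 2 * (n * Lam) - 2 * (Lam * (1 + norm v ^ 2))) \<ge> E * 2"
      using br E0 by (intro mult_left_mono) auto
    then have "E * (C * \<psi> + 2 * X) - E * (2 * (n * Lam)) - E * (2 * (Lam * (1 + norm v ^ 2))) \<ge> E * 2"
      by (simp add: algebra_simps)
    then show False using subq T1 T2 T3 E0 unfolding n_def by linarith
  qed
  show ?thesis using main M_def by simp
qed

end
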